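(* Let $n\ge1$ and let the zeros $z_1(x),\ldots,z_n(x)$ of $\psi_n(x,z)=\Gamma(1-z)P^z_n(\tanh x)$ with respect to $z$ be labeled so that they are ordered from large to small near $x=0$ and depend twice differentiably on $x$ with $z_j(x)\ne z_k(x)$ for $j\ne k$. Then $$z_\ell''(x)+2z_\ell(x)z_\ell'(x)=\sum_{j=1,\,j\neq\ell}^n\frac{2z_\ell'(x)z_j'(x)}{z_\ell(x)-z_j(x)},\qquad \ell=1,\ldots,n,$$ with initial conditions $z_\ell(0)=n+1-2\ell$ and $$z_\ell'(0)=\frac{-\prod_{j=1,\,j\neq|n+1-2\ell|}^n\bigl((n+1-2\ell)^2-j^2\bigr)}{2^{n-1}\prod_{j=1,\,j\neq\ell,\,n+1-\ell}^n 2(\ell-j)^2},\qquad \ell=1,\ldots,n.$$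
   Context: Fix an integer $n\ge1$. For $x\in\mathbb{R}$ and $z\in\mathbb{C}\setminus\{1,\ldots,n\}$ define $$\psi_n(x,z)=\frac{e^{zx}}{(1+e^{-2x})^n}\sum_{m=0}^n e^{-2mx}\binom{n}{m}\prod_{j=1}^m\frac{z+n+1-j}{z-j},$$ which equals $\Gamma(1-z)P_n^z(\tanh x)$, where $P_n^z$ is the associated Legendre function of degree $n$ and order $z$ and $\Gamma$ is the Euler gamma function. For each $x$, the polynomial $Q_x(z)=\sum_{m=0}^n e^{-2mx}\binom{n}{m}\prod_{j=1}^m(z+n+1-j)\prod_{k=m+1}^n(z-k)$ has degree $n$ with leading coefficient $(1+e^{-2x})^n$; its roots (with multiplicity) are denoted $z_1(x),\ldots,z_n(x)$, so that $\psi_n(x,z)=\frac{e^{zx}}{(1+e^{-2x})^n}\prod_{j=1}^n\frac{z-z_j(x)}{z-j}$. These are called the zeros of $\psi_n(x,\cdot)$. *)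

theory Defs
  imports "HOL-Analysis.Analysis"
begin

text \<open>The polynomial Q_x(z) whose roots are the zeros of psi_n(x, .).\<close>
definition Qpoly :: "nat \<Rightarrow> real \<Rightarrow> complex \<Rightarrow> complex" where
  "Qpoly n x z = (\<Sum>m=0..n. complex_of_real (exp (-2 * real m * x)) * of_nat (n choose m)
      * (\<Prod>j=1..m. z + of_nat n + 1 - of_nat j) * (\<Prod>k=m+1..n. z - of_nat k))"

text \<open>psi_n(x,z) as in the paper (for z not in {1..n}).\<close>
definition psi :: "nat \<Rightarrow> real \<Rightarrow> complex \<Rightarrow> complex" where
  "psi n x z = exp (z * complex_of_real x) / complex_of_real ((1 + exp (-2*x)) ^ n)
      * (\<Sum>m=0..n. complex_of_real (exp (-2 * real m * x)) * of_nat (n choose m)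
          * (\<Prod>j=1..m. (z + of_nat n + 1 - of_nat j) / (z - of_nat j)))"

definition slope_num :: "nat \<Rightarrow> nat \<Rightarrow> int" where
  "slope_num n l = (let c = int n + 1 - 2 * int l in
     - (\<Prod>j\<in>{1..n} - {nat \<bar>c\<bar>}. c^2 - (int j)^2))"

definition slope_den :: "nat \<Rightarrow> nat \<Rightarrow> int" where
  "slope_den n l = 2^(n-1) * (\<Prod>j\<in>{1..n} - {l, n+1-l}. 2 * (int l - int j)^2)"

end

theory Submission
  imports Defs
begin


definition Xp :: "nat \<Rightarrow> nat \<Rightarrow> complex \<Rightarrow> complex" where
  "Xp n m w = (\<Prod>j=1..m. w + of_nat n + 1 - of_nat j)"
definition Yp :: "nat \<Rightarrow> nat \<Rightarrow> complex \<Rightarrow> complex" where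
  "Yp n m w = (\<Prod>k=m+1..n. w - of_nat k)"
definition ac :: "nat \<Rightarrow> nat \<Rightarrow> complex \<Rightarrow> complex" where
  "ac n m w = of_nat (n choose m) * Xp n m w * Yp n m w"

lemma Qpoly_ac: "Qpoly n x w = (\<Sum>m\<le>n. complex_of_real (exp (-2 * real m * x)) * ac n m w)"
  by (simp add: Qpoly_def ac_def Xp_def Yp_def mult.assoc atLeast0AtMost)

lemma Xp_0[simp]: "Xp n 0 w = 1" by (simp add: Xp_def)
lemma Yp_n[simp]: "Yp n n w = 1" by (simp add: Yp_def)

lemma Xp_Suc: "Xp n (Suc m) w = Xp n m w * (w + of_nat n - of_nat m)"
  by (simp add: Xp_def algebra_simps)

lemma Yp_step: "m < n \<Longrightarrow> Yp n m w = (w - of_nat (Suc m)) * Yp n (Suc m) w"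
  unfolding Yp_def by (simp add: prod.atLeast_Suc_atMost)

lemma Xp_up: "Xp n (Suc m) (w+1) = (w + of_nat n + 1) * Xp n m w"
  by (induction m) (simp_all add: Xp_Suc algebra_simps)

lemma Xp_down: "(w + of_nat n) * Xp n m (w-1) = Xp n (Suc m) w"
proof (induction m)
  case 0 then show ?case by (simp add: Xp_Suc)
next
  case (Suc m)
  have "(w + of_nat n) * Xp n (Suc m) (w-1) = ((w + of_nat n) * Xp n m (w-1)) * (w - 1 + of_nat n - of_nat m)"
    by (simp add: Xp_Suc)
  also have "\<dots> = Xp n (Suc (Suc m)) w" using Suc.IH[unfolded Xp_Suc] unfolding Xp_Suc of_nat_Suc by algebra
  finally show ?case .
qed

lemma prod_down: "m < n \<Longrightarrow> (\<Prod>k=Suc m..n. (w - 1) - (of_nat k::complex))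
      = (w - of_nat n - 1) * (\<Prod>k=Suc (Suc m)..n. w - of_nat k)"
proof (induction n)
  case 0 then show ?case by simp
next
  case (Suc n)
  show ?case
  proof (cases "m < n")
    case True
    then have ih: "(\<Prod>k=Suc m..n. (w - 1) - (of_nat k::complex))
      = (w - of_nat n - 1) * (\<Prod>k=Suc (Suc m)..n. w - of_nat k)" using Suc by simp
    have e1: "(\<Prod>k=Suc m..Suc n. (w - 1) - (of_nat k::complex)) = (\<Prod>k=Suc m..n. (w - 1) - (of_nat k::complex)) * (w - 1 - of_nat (Suc n))"
      using True by simp
    have e2: "(\<Prod>k=Suc (Suc m)..Suc n. w - (of_nat k::complex)) = (\<Prod>k=Suc (Suc m)..n. w - (of_nat k::complex)) * (w - of_nat (Suc n))"
      using True by simp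
    show ?thesis unfolding e1 e2 of_nat_Suc using ih by algebra
  next
    case False
    then have "n = m" using Suc by simp
    then show ?thesis by (simp add: algebra_simps)
  qed
qed

lemma Yp_down: "m < n \<Longrightarrow> Yp n m (w-1) = (w - of_nat n - 1) * Yp n (Suc m) w"
  unfolding Yp_def using prod_down[of m n w] by simp

lemma prod_up: "m \<le> n \<Longrightarrow> (w - of_nat n) * (\<Prod>k=Suc m..n. (w + 1) - (of_nat k::complex))
      = (w - of_nat m) * (\<Prod>k=Suc m..n. w - of_nat k)"
proof (induction n)
  case 0 then show ?case by simp
next
  case (Suc n)
  show ?case
  proof (cases "m \<le> n")
    case True
    then have ih: "(w - of_nat n) * (\<Prod>k=Suc m..n. (w + 1) - (of_nat k::complex))
      = (w - of_nat m) * (\<Prod>k=Suc m..n. w - of_nat k)" using Suc by simp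
    have e1: "(\<Prod>k=Suc m..Suc n. (w + 1) - (of_nat k::complex)) = (\<Prod>k=Suc m..n. (w + 1) - (of_nat k::complex)) * (w - of_nat n)"
      using True by simp
    have e2: "(\<Prod>k=Suc m..Suc n. w - (of_nat k::complex)) = (\<Prod>k=Suc m..n. w - (of_nat k::complex)) * (w - of_nat n - 1)"
      using True by (simp add: algebra_simps)
    show ?thesis unfolding e1 e2 of_nat_Suc using ih by algebra
  next
    case False
    then have "Suc n = m" using Suc by simp
    then show ?thesis by (simp add: algebra_simps)
  qed
qed

lemma Yp_up: "m \<le> n \<Longrightarrow> (w - of_nat n) * Yp n m (w+1) = (w - of_nat m) * Yp n m w"
  unfolding Yp_def using prod_up[of m n w] by simp

lemma binom_c: "m < n \<Longrightarrow> of_nat (Suc m) * of_nat (n choose Suc m) = (of_nat n - of_nat m) * (of_nat (n choose m) :: complex)"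
proof -
  assume "m < n"
  have "Suc m * (n choose Suc m) = (n - m) * (n choose m)"
    using binomial_absorption[of m n] binomial_absorb_comp[of n m] by simp
  then have "of_nat (Suc m * (n choose Suc m)) = (of_nat ((n - m) * (n choose m)) :: complex)" by simp
  then show ?thesis using \<open>m < n\<close> by (simp add: of_nat_diff algebra_simps)
qed

lemma pde_t: "m < n \<Longrightarrow> of_nat (Suc m) * (of_nat (Suc m) - w) * ac n (Suc m) w
   + (of_nat n - of_nat m) * (of_nat n - of_nat m + w) * ac n m w = 0"
proof -
  assume mn: "m < n"
  note b = binom_c[OF mn]
  show ?thesis unfolding ac_def Xp_Suc Yp_step[OF mn]
    using b by algebra
qed

lemma r_t: "m < n \<Longrightarrow> (w - of_nat (Suc m)) * ac n (Suc m) w + (of_nat n - of_nat m) * ac n m w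
    = (w - of_nat n) * ac n (Suc m) (w+1)"
proof -
  assume mn: "m < n"
  note b = binom_c[OF mn]
  have y: "(w - of_nat n) * Yp n (Suc m) (w+1) = (w - of_nat (Suc m)) * Yp n (Suc m) w"
    using Yp_up[of "Suc m" n w] mn by simp
  have a1: "ac n (Suc m) (w+1) = of_nat (n choose Suc m) * ((w + of_nat n + 1) * Xp n m w) * Yp n (Suc m) (w+1)"
    by (simp add: ac_def Xp_up)
  have a2: "ac n (Suc m) w = of_nat (n choose Suc m) * (Xp n m w * (w + of_nat n - of_nat m)) * Yp n (Suc m) w"
    by (simp add: ac_def Xp_Suc)
  have a3: "ac n m w = of_nat (n choose m) * Xp n m w * ((w - of_nat (Suc m)) * Yp n (Suc m) w)"
    by (simp add: ac_def Yp_step[OF mn])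
  show ?thesis unfolding a1 a2 a3 of_nat_Suc
    using b[unfolded of_nat_Suc] y[unfolded of_nat_Suc] by algebra
qed

lemma r_0: "w * ac n 0 w = (w - of_nat n) * ac n 0 (w+1)"
  unfolding ac_def using Yp_up[of 0 n w] by simp

lemma l_t: "m < n \<Longrightarrow> (w + of_nat n - of_nat m) * ac n m w - of_nat (Suc m) * ac n (Suc m) w
    = (w + of_nat n) * ac n m (w-1)"
proof -
  assume mn: "m < n"
  note b = binom_c[OF mn]
  have x: "(w + of_nat n) * Xp n m (w-1) = Xp n m w * (w + of_nat n - of_nat m)"
    using Xp_down[of w n m] Xp_Suc by simp
  have a2: "ac n (Suc m) w = of_nat (n choose Suc m) * (Xp n m w * (w + of_nat n - of_nat m)) * Yp n (Suc m) w"
    by (simp add: ac_def Xp_Suc)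
  have a3: "ac n m w = of_nat (n choose m) * Xp n m w * ((w - of_nat (Suc m)) * Yp n (Suc m) w)"
    by (simp add: ac_def Yp_step[OF mn])
  have a4: "ac n m (w-1) = of_nat (n choose m) * Xp n m (w-1) * ((w - of_nat n - 1) * Yp n (Suc m) w)"
    by (simp add: ac_def Yp_down[OF mn])
  show ?thesis unfolding a2 a3 a4 of_nat_Suc
    using b[unfolded of_nat_Suc] x by algebra
qed

lemma l_n: "w * ac n n w = (w + of_nat n) * ac n n (w-1)"
  unfolding ac_def using Xp_down[of w n n] by (simp add: Xp_Suc)



definition Asum :: "nat \<Rightarrow> complex \<Rightarrow> complex" where
  "Asum n w = (\<Sum>m\<le>n. ac n m w)"
definition Tsum :: "nat \<Rightarrow> complex \<Rightarrow> complex" where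
  "Tsum n w = (\<Sum>m\<le>n. (w + of_nat n - 2 * of_nat m) * ac n m w)"

lemma Tsum_split: "Tsum n w = (\<Sum>m\<le>n. (w - of_nat m) * ac n m w) + (\<Sum>m\<le>n. (of_nat n - of_nat m) * ac n m w)"
  unfolding Tsum_def sum.distrib[symmetric] by (rule sum.cong) (simp_all add: algebra_simps)

lemma RS: "(w - of_nat n) * Asum n (w+1) = Tsum n w"
proof -
  have "(w - of_nat n) * Asum n (w+1) = (w - of_nat n) * ac n 0 (w+1) + (\<Sum>m<n. (w - of_nat n) * ac n (Suc m) (w+1))"
    by (simp add: Asum_def sum.atMost_shift[of _ n] distrib_left sum_distrib_left)
  also have "\<dots> = w * ac n 0 w + (\<Sum>m<n. (w - of_nat (Suc m)) * ac n (Suc m) w + (of_nat n - of_nat m) * ac n m w)"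
    by (intro arg_cong2[where f="(+)"] sum.cong) (auto simp: r_0 r_t[symmetric] simp del: of_nat_Suc)
  also have "\<dots> = Tsum n w"
  proof -
    have t2: "(\<Sum>m\<le>n. (w - of_nat m) * ac n m w) = w * ac n 0 w + (\<Sum>m<n. (w - of_nat (Suc m)) * ac n (Suc m) w)"
      by (simp add: sum.atMost_shift[of _ n])
    have t3: "(\<Sum>m\<le>n. (of_nat n - of_nat m) * ac n m w) = (\<Sum>m<n. (of_nat n - of_nat m) * ac n m w)"
      by (simp add: lessThan_Suc_atMost[symmetric])
    show ?thesis unfolding Tsum_split t2 t3 by (simp add: sum.distrib)
  qed
  finally show ?thesis .
qed

lemma LS: "(w + of_nat n) * Asum n (w-1) = Tsum n w"
proof -
  have "(w + of_nat n) * Asum n (w-1) = (\<Sum>m<n. (w + of_nat n) * ac n m (w-1)) + (w + of_nat n) * ac n n (w-1)"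
    by (simp add: Asum_def lessThan_Suc_atMost[symmetric] distrib_left sum_distrib_left)
  also have "\<dots> = (\<Sum>m<n. (w + of_nat n - of_nat m) * ac n m w - of_nat (Suc m) * ac n (Suc m) w) + w * ac n n w"
    by (intro arg_cong2[where f="(+)"] sum.cong) (auto simp: l_n l_t[symmetric] simp del: of_nat_Suc)
  also have "\<dots> = Tsum n w"
  proof -
    have t1: "Tsum n w = (\<Sum>m\<le>n. (w + of_nat n - of_nat m) * ac n m w) - (\<Sum>m\<le>n. of_nat m * ac n m w)"
      unfolding Tsum_def sum_subtractf[symmetric] by (rule sum.cong) (simp_all add: algebra_simps)
    have t2: "(\<Sum>m\<le>n. (w + of_nat n - of_nat m) * ac n m w) = (\<Sum>m<n. (w + of_nat n - of_nat m) * ac n m w) + w * ac n n w"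
      by (simp add: lessThan_Suc_atMost[symmetric])
    have t3: "(\<Sum>m\<le>n. of_nat m * ac n m w) = (\<Sum>m<n. of_nat (Suc m) * ac n (Suc m) w)"
      by (simp add: sum.atMost_shift[of _ n])
    show ?thesis unfolding t1 t2 t3 by (simp add: sum_subtractf)
  qed
  finally show ?thesis .
qed

lemma Arec: "(w - of_nat n) * Asum n (w+1) = (w + of_nat n) * Asum n (w-1)"
  using RS LS by simp

lemma PS: "(\<Sum>m\<le>n. (of_nat m * (of_nat m - w) * u^m
     + (of_nat n - of_nat m) * (of_nat n - of_nat m + w) * u^(Suc m)) * ac n m w) = 0"
proof -
  have "(\<Sum>m\<le>n. (of_nat m * (of_nat m - w) * u^m
     + (of_nat n - of_nat m) * (of_nat n - of_nat m + w) * u^(Suc m)) * ac n m w)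
     = (\<Sum>m\<le>n. of_nat m * (of_nat m - w) * u^m * ac n m w)
       + (\<Sum>m\<le>n. (of_nat n - of_nat m) * (of_nat n - of_nat m + w) * u^(Suc m) * ac n m w)"
    by (simp add: sum.distrib[symmetric] distrib_right)
  also have "\<dots> = (\<Sum>m<n. of_nat (Suc m) * (of_nat (Suc m) - w) * u^(Suc m) * ac n (Suc m) w)
       + (\<Sum>m<n. (of_nat n - of_nat m) * (of_nat n - of_nat m + w) * u^(Suc m) * ac n m w)"
  proof -
    have t2: "(\<Sum>m\<le>n. of_nat m * (of_nat m - w) * u^m * ac n m w) = (\<Sum>m<n. of_nat (Suc m) * (of_nat (Suc m) - w) * u^(Suc m) * ac n (Suc m) w)"
      by (simp add: sum.atMost_shift[of _ n] del: of_nat_Suc)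
    have t3: "(\<Sum>m\<le>n. (of_nat n - of_nat m) * (of_nat n - of_nat m + w) * u^(Suc m) * ac n m w)
       = (\<Sum>m<n. (of_nat n - of_nat m) * (of_nat n - of_nat m + w) * u^(Suc m) * ac n m w)"
      by (simp add: lessThan_Suc_atMost[symmetric])
    show ?thesis unfolding t2 t3 ..
  qed
  also have "\<dots> = (\<Sum>m<n. u^(Suc m) * (of_nat (Suc m) * (of_nat (Suc m) - w) * ac n (Suc m) w
       + (of_nat n - of_nat m) * (of_nat n - of_nat m + w) * ac n m w))"
    by (simp add: sum.distrib[symmetric] algebra_simps)
  also have "\<dots> = 0"
    by (rule sum.neutral) (use pde_t in \<open>auto simp del: of_nat_Suc\<close>)
  finally show ?thesis .
qed

lemma Azero: "n \<ge> 1 \<Longrightarrow> k < n \<Longrightarrow> Asum n (2 * of_nat k + 1 - of_nat n) = 0"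
proof (induction k)
  case 0
  have "(- of_nat n - of_nat n) * Asum n (- of_nat n + 1) = (- of_nat n + of_nat n) * Asum n (- of_nat n - 1)"
    by (rule Arec)
  then have "(2 * of_nat n) * Asum n (1 - of_nat n) = 0" by (simp add: algebra_simps)
  then show ?case using 0 by simp
next
  case (Suc k)
  define w :: complex where "w = 2 * of_nat k + 2 - of_nat n"
  have e1: "w + 1 = 2 * of_nat (Suc k) + 1 - of_nat n" by (simp add: w_def)
  have e2: "w - 1 = 2 * of_nat k + 1 - of_nat n" by (simp add: w_def)
  have ih: "Asum n (w - 1) = 0" unfolding e2 using Suc by simp
  have "(w - of_nat n) * Asum n (w+1) = 0" using Arec[of w n] ih by simp
  moreover have "w - of_nat n \<noteq> 0"
  proof
    assume "w - of_nat n = 0"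
    then have "(of_nat (2 * Suc k) :: complex) = of_nat (2 * n)" by (simp add: w_def algebra_simps)
    then have "2 * Suc k = 2 * n" using of_nat_eq_iff by blast
    then show False using Suc by simp
  qed
  ultimately show ?case unfolding e1 by simp
qed



lemma hvd_prod:
  fixes f :: "'i \<Rightarrow> real \<Rightarrow> complex"
  assumes "\<And>i. i \<in> S \<Longrightarrow> (f i has_vector_derivative f' i) (at x)"
  shows "((\<lambda>x. \<Prod>i\<in>S. f i x) has_vector_derivative (\<Sum>i\<in>S. f' i * (\<Prod>j\<in>S-{i}. f j x))) (at x)"
proof -
  have "((\<lambda>x. \<Prod>i\<in>S. f i x) has_derivative (\<lambda>y. \<Sum>i\<in>S. (y *\<^sub>R f' i) * (\<Prod>j\<in>S-{i}. f j x))) (at x)"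
    using assms unfolding has_vector_derivative_def by (intro has_derivative_prod) auto
  then show ?thesis unfolding has_vector_derivative_def
    by (simp add: scaleR_sum_right)
qed

definition Q1 :: "nat \<Rightarrow> real \<Rightarrow> complex \<Rightarrow> complex" where
  "Q1 n x w = (\<Sum>m\<le>n. complex_of_real (-2 * real m * exp (-2 * real m * x)) * ac n m w)"
definition Q2 :: "nat \<Rightarrow> real \<Rightarrow> complex \<Rightarrow> complex" where
  "Q2 n x w = (\<Sum>m\<le>n. complex_of_real (4 * (real m)^2 * exp (-2 * real m * x)) * ac n m w)"

lemma dQ: "((\<lambda>x. Qpoly n x w) has_vector_derivative Q1 n x w) (at x)"
  unfolding Qpoly_ac Q1_def
  by (intro has_vector_derivative_sum has_vector_derivative_mult_left has_vector_derivative_of_real)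
     (auto intro!: derivative_eq_intros)

lemma dQ1: "((\<lambda>x. Q1 n x w) has_vector_derivative Q2 n x w) (at x)"
  unfolding Q1_def Q2_def
  by (intro has_vector_derivative_sum has_vector_derivative_mult_left has_vector_derivative_of_real)
     (auto intro!: derivative_eq_intros simp: power2_eq_square)

lemma Qkey: "(1 + complex_of_real (exp (-2*x))) * Q2 n x w
   + 2 * (2 * of_nat n * complex_of_real (exp (-2*x)) + w * (1 + complex_of_real (exp (-2*x)))) * Q1 n x w
   + 4 * of_nat n * (of_nat n + w) * complex_of_real (exp (-2*x)) * Qpoly n x w = 0"
proof -
  define u where "u = complex_of_real (exp (-2*x))"
  have em: "complex_of_real (exp (-2 * real m * x)) = u ^ m" for m
  proof -
    have "exp (-2 * real m * x) = exp (-2*x) ^ m"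
      by (metis exp_of_nat_mult mult.assoc mult.commute mult.left_commute)
    then show ?thesis by (simp add: u_def)
  qed
  have em1: "complex_of_real (-2 * real m * exp (-2 * real m * x)) = -2 * of_nat m * u^m" for m
    by (simp add: em[symmetric])
  have em2: "complex_of_real (4 * (real m)^2 * exp (-2 * real m * x)) = 4 * (of_nat m)^2 * u^m" for m
    by (simp add: em[symmetric])
  have "(1 + u) * Q2 n x w + 2 * (2 * of_nat n * u + w * (1 + u)) * Q1 n x w
     + 4 * of_nat n * (of_nat n + w) * u * Qpoly n x w
     = 4 * (\<Sum>m\<le>n. (of_nat m * (of_nat m - w) * u^m
     + (of_nat n - of_nat m) * (of_nat n - of_nat m + w) * u^(Suc m)) * ac n m w)"
    unfolding Q1_def Q2_def Qpoly_ac sum_distrib_left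
    unfolding sum.distrib[symmetric]
    by (rule sum.cong[OF refl], unfold em em1 em2 power_Suc, algebra)
  also have "\<dots> = 0" using PS by simp
  finally show ?thesis by (simp add: u_def)
qed



lemma main_ode:
  fixes n :: nat and I :: "real set"
    and z z' z'' :: "nat \<Rightarrow> real \<Rightarrow> complex"
  assumes n: "n \<ge> 1"
    and I: "open I"
    and roots: "\<And>x w. x \<in> I \<Longrightarrow>
        Qpoly n x w = complex_of_real ((1 + exp (-2*x)) ^ n) * (\<Prod>j=1..n. w - z j x)"
    and d1: "\<And>l x. l \<in> {1..n} \<Longrightarrow> x \<in> I \<Longrightarrow> (z l has_vector_derivative z' l x) (at x)"
    and d2: "\<And>l x. l \<in> {1..n} \<Longrightarrow> x \<in> I \<Longrightarrow> (z' l has_vector_derivative z'' l x) (at x)"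
    and distinct: "\<And>j k x. j \<in> {1..n} \<Longrightarrow> k \<in> {1..n} \<Longrightarrow> j \<noteq> k \<Longrightarrow> x \<in> I \<Longrightarrow> z j x \<noteq> z k x"
    and l: "l \<in> {1..n}" and x0: "x0 \<in> I"
  shows "Q1 n x0 (z l x0) = - complex_of_real ((1 + exp (-2*x0)) ^ n) * z' l x0 * (\<Prod>k\<in>{1..n}-{l}. z l x0 - z k x0)"
    and "z'' l x0 + 2 * z l x0 * z' l x0
              = (\<Sum>j\<in>{1..n} - {l}. 2 * z' l x0 * z' j x0 / (z l x0 - z j x0))"
proof -
  define w where "w = z l x0"
  define J where "J = {1..n} - {l}"
  have J: "finite J" "J \<subseteq> {1..n}" "l \<notin> J" by (auto simp: J_def)
  define R where "R x = (\<Prod>k\<in>J. w - z k x)" for x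
  define R' where "R' x = (\<Sum>j\<in>J. (- z' j x) * (\<Prod>k\<in>J-{j}. w - z k x))" for x
  define E where "E x = complex_of_real ((1 + exp (-2*x)) ^ n)" for x
  define E' where "E' x = complex_of_real (real n * (1 + exp (-2*x)) ^ (n-1) * (- 2 * exp (-2*x)))" for x
  define H where "H x = E x * (w - z l x)" for x
  define H' where "H' x = E x * (- z' l x) + E' x * (w - z l x)" for x
  have dfac: "((\<lambda>x. w - z k x) has_vector_derivative (- z' k x)) (at x)" if "k \<in> {1..n}" "x \<in> I" for k x
    using has_vector_derivative_diff[OF has_vector_derivative_const d1[OF that]] by simp
  have hE: "(E has_vector_derivative E' x) (at x)" for x
    unfolding E_def E'_def
    by (rule has_vector_derivative_of_real) (auto intro!: derivative_eq_intros)
  have "\<exists>D. ((\<lambda>x. real n * (1 + exp (-2*x))^(n-1) * (-2*exp(-2*x))) has_real_derivative D) (at x0)"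
    apply (rule exI)
    apply (rule derivative_eq_intros refl)+
    done
  then obtain D where "((\<lambda>x. real n * (1 + exp (-2*x))^(n-1) * (-2*exp(-2*x))) has_real_derivative D) (at x0)"
    by blast
  then have hE2': "(E' has_vector_derivative (complex_of_real D)) (at x0)"
    unfolding E'_def by (rule has_vector_derivative_of_real)
  define e2 where "e2 = complex_of_real D"
  have hE2: "(E' has_vector_derivative e2) (at x0)" using hE2' by (simp add: e2_def)
  have hR: "(R has_vector_derivative R' x) (at x)" if "x \<in> I" for x
    unfolding R_def R'_def by (rule hvd_prod) (use J that dfac in auto)
  obtain r2 where hR2: "(R' has_vector_derivative r2) (at x0)"
  proof -
    have "((\<lambda>x. (- z' j x) * (\<Prod>k\<in>J-{j}. w - z k x)) has_vector_derivative
       ((- z' j x0) * (\<Sum>i\<in>J-{j}. (- z' i x0) * (\<Prod>k\<in>J-{j}-{i}. w - z k x0)) + (- z'' j x0) * (\<Prod>k\<in>J-{j}. w - z k x0))) (at x0)"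
      if "j \<in> J" for j
      using J that x0
      by (intro has_vector_derivative_mult has_vector_derivative_minus d2 hvd_prod dfac) auto
    then have "(R' has_vector_derivative (\<Sum>j\<in>J. (- z' j x0) * (\<Sum>i\<in>J-{j}. (- z' i x0) * (\<Prod>k\<in>J-{j}-{i}. w - z k x0)) + (- z'' j x0) * (\<Prod>k\<in>J-{j}. w - z k x0))) (at x0)"
      unfolding R'_def by (intro has_vector_derivative_sum) auto
    then show ?thesis by (rule that)
  qed
  have hH: "(H has_vector_derivative H' x) (at x)" if "x \<in> I" for x
    unfolding H_def H'_def using l that
    by (intro has_vector_derivative_mult hE dfac) auto
  define h2 where "h2 = E x0 * (- z'' l x0) + E' x0 * (- z' l x0) + (E' x0 * (- z' l x0) + e2 * (w - z l x0))"
  have hH2: "(H' has_vector_derivative h2) (at x0)"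
    unfolding H'_def h2_def using l x0
    by (intro has_vector_derivative_mult has_vector_derivative_add hE hE2 dfac has_vector_derivative_minus d2) auto
  have Qeq: "Qpoly n x w = H x * R x" if "x \<in> I" for x
  proof -
    have "(\<Prod>j=1..n. w - z j x) = (w - z l x) * R x"
      unfolding R_def J_def using l by (simp add: prod.remove)
    then show ?thesis using roots[OF that, of w] by (simp add: H_def E_def)
  qed
  have step1: "Q1 n x w = H x * R' x + H' x * R x" if "x \<in> I" for x
  proof -
    have "((\<lambda>x. H x * R x) has_vector_derivative (H x * R' x + H' x * R x)) (at x)"
      using that by (intro has_vector_derivative_mult hH hR)
    then have "((\<lambda>x. Qpoly n x w) has_vector_derivative (H x * R' x + H' x * R x)) (at x)"
      by (rule has_vector_derivative_transform_within_open[OF _ I that]) (simp add: Qeq)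
    then show ?thesis using dQ by (metis vector_derivative_unique_at)
  qed
  have Hx0: "H x0 = 0" by (simp add: H_def w_def)
  have H'x0: "H' x0 = - E x0 * z' l x0" by (simp add: H'_def w_def)
  have h2x0: "h2 = - E x0 * z'' l x0 - 2 * E' x0 * z' l x0" by (simp add: h2_def w_def)
  have Q1x0: "Q1 n x0 w = - E x0 * z' l x0 * R x0"
    using step1[OF x0] Hx0 H'x0 by simp
  then show "Q1 n x0 (z l x0) = - complex_of_real ((1 + exp (-2*x0)) ^ n) * z' l x0 * (\<Prod>k\<in>{1..n}-{l}. z l x0 - z k x0)"
    by (simp add: w_def E_def R_def J_def)
  have step2: "Q2 n x0 w = H x0 * r2 + H' x0 * R' x0 + (H' x0 * R' x0 + h2 * R x0)"
  proof -
    have "((\<lambda>x. H x * R' x + H' x * R x) has_vector_derivative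
        (H x0 * r2 + H' x0 * R' x0 + (H' x0 * R' x0 + h2 * R x0))) (at x0)"
      using x0 by (intro has_vector_derivative_add has_vector_derivative_mult hH hR hH2 hR2)
    then have "((\<lambda>x. Q1 n x w) has_vector_derivative
        (H x0 * r2 + H' x0 * R' x0 + (H' x0 * R' x0 + h2 * R x0))) (at x0)"
      by (rule has_vector_derivative_transform_within_open[OF _ I x0]) (simp add: step1)
    then show ?thesis using dQ1 by (metis vector_derivative_unique_at)
  qed
  define u where "u = complex_of_real (exp (-2*x0))"
  have Q0: "Qpoly n x0 w = 0" using Qeq[OF x0] Hx0 by simp
  have key: "(1 + u) * Q2 n x0 w + 2 * (2 * of_nat n * u + w * (1 + u)) * Q1 n x0 w = 0"
    using Qkey[of x0 n w] Q0 by (simp add: u_def)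
  have EE: "(1 + u) * E' x0 = - 2 * of_nat n * u * E x0"
  proof -
    have "(1 + exp (-2*x0)) * (1 + exp (-2*x0)) ^ (n-1) = (1 + exp (-2*x0)) ^ n"
      using n by (metis One_nat_def Suc_pred' less_eq_Suc_le power_Suc)
    then have r: "(1 + exp (-2*x0)) * (real n * (1 + exp (-2*x0)) ^ (n-1) * (- 2 * exp (-2*x0)))
       = - 2 * real n * exp (-2*x0) * (1 + exp (-2*x0)) ^ n"
      by (metis (no_types, lifting) mult.assoc mult.commute mult.left_commute)
    have a: "(1 + u) * E' x0 = complex_of_real ((1 + exp (-2*x0)) * (real n * (1 + exp (-2*x0)) ^ (n-1) * (- 2 * exp (-2*x0))))"
      unfolding u_def E'_def by simp
    have b: "- 2 * of_nat n * u * E x0 = complex_of_real (- 2 * real n * exp (-2*x0) * (1 + exp (-2*x0)) ^ n)"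
      unfolding u_def E_def by simp
    show ?thesis by (metis a b r)
  qed
  have Enz: "E x0 \<noteq> 0" unfolding E_def
    by (metis add_pos_pos exp_gt_zero of_real_eq_0_iff power_not_zero zero_less_one less_irrefl)
  have unz: "1 + u \<noteq> 0"
  proof
    assume "1 + u = 0"
    then have "complex_of_real (1 + exp (-2*x0)) = 0" by (simp add: u_def)
    then have "1 + exp (-2*x0) = 0" using of_real_eq_0_iff by blast
    then show False by (metis add_pos_pos exp_gt_zero zero_less_one less_irrefl)
  qed
  have wz: "w - z j x0 \<noteq> 0" if "j \<in> J" for j
  proof -
    have "j \<in> {1..n}" "j \<noteq> l" using that J by auto
    then show ?thesis using distinct[of l j x0] l x0 by (auto simp: w_def)
  qed
  have Rnz: "R x0 \<noteq> 0" unfolding R_def using wz J by (simp add: prod_zero_iff)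
  have R'x0: "R' x0 = R x0 * (\<Sum>j\<in>J. - z' j x0 / (w - z j x0))"
  proof -
    have "(\<Prod>k\<in>J-{j}. w - z k x0) = R x0 / (w - z j x0)" if "j \<in> J" for j
      using that J wz[OF that] unfolding R_def by (simp add: prod.remove field_simps)
    then show ?thesis unfolding R'_def sum_distrib_left
      by (intro sum.cong) auto
  qed
  have main: "(1 + u) * E x0 * R x0 * (z'' l x0 + 2 * w * z' l x0 + 2 * z' l x0 * (\<Sum>j\<in>J. - z' j x0 / (w - z j x0))) = 0"
  proof -
    have "(1 + u) * (H x0 * r2 + H' x0 * R' x0 + (H' x0 * R' x0 + h2 * R x0))
       + 2 * (2 * of_nat n * u + w * (1 + u)) * (- E x0 * z' l x0 * R x0) = 0"
      using key step2 Q1x0 by simp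
    then show ?thesis unfolding Hx0 H'x0 h2x0 R'x0 using EE by algebra
  qed
  then have "z'' l x0 + 2 * w * z' l x0 + 2 * z' l x0 * (\<Sum>j\<in>J. - z' j x0 / (w - z j x0)) = 0"
    using unz Enz Rnz by simp
  then have A: "z'' l x0 + 2 * w * z' l x0 = - (2 * z' l x0 * (\<Sum>j\<in>J. - z' j x0 / (w - z j x0)))"
    by (simp only: eq_neg_iff_add_eq_0)
  have B: "(\<Sum>j\<in>J. 2 * z' l x0 * z' j x0 / (w - z j x0)) = - (2 * z' l x0 * (\<Sum>j\<in>J. - z' j x0 / (w - z j x0)))"
    by (simp add: sum_distrib_left sum_negf[symmetric])
  show "z'' l x0 + 2 * z l x0 * z' l x0
              = (\<Sum>j\<in>{1..n} - {l}. 2 * z' l x0 * z' j x0 / (z l x0 - z j x0))"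
    using A B unfolding w_def J_def by metis
qed



lemma Qpoly_0: "Qpoly n 0 w = Asum n w"
  by (simp add: Qpoly_ac Asum_def)

lemma Q1_0: "Q1 n 0 w = Tsum n w - (w + of_nat n) * Asum n w"
  unfolding Q1_def Tsum_def Asum_def sum_distrib_left sum_subtractf[symmetric]
  by (rule sum.cong) (simp_all add: algebra_simps)

lemma strict_inc_id:
  fixes \<sigma> :: "nat \<Rightarrow> nat"
  assumes rng: "\<And>l. l \<in> {1..n} \<Longrightarrow> \<sigma> l \<in> {1..n}"
    and inc: "\<And>l l'. l \<in> {1..n} \<Longrightarrow> l' \<in> {1..n} \<Longrightarrow> l < l' \<Longrightarrow> \<sigma> l < \<sigma> l'"
    and l: "l \<in> {1..n}"
  shows "\<sigma> l = l"
proof -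
  have ge: "1 \<le> l \<longrightarrow> l \<le> n \<longrightarrow> l \<le> \<sigma> l" for l
  proof (induction l)
    case 0 then show ?case by simp
  next
    case (Suc l)
    show ?case
    proof (cases "l = 0")
      case True then show ?thesis using rng[of 1] by auto
    next
      case False
      then show ?thesis using Suc inc[of l "Suc l"] by auto
    qed
  qed
  have le: "k < n \<longrightarrow> \<sigma> (n - k) \<le> n - k" for k
  proof (induction k)
    case 0 then show ?case using rng[of n] by auto
  next
    case (Suc k)
    show ?case
    proof
      assume "Suc k < n"
      then have "\<sigma> (n - Suc k) < \<sigma> (n - k)" using inc[of "n - Suc k" "n - k"] by auto
      then show "\<sigma> (n - Suc k) \<le> n - Suc k" using Suc \<open>Suc k < n\<close> by auto
    qed
  qed
  show ?thesis using ge[of l] le[of "n - l"] l by auto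
qed

lemma zeros_at_0:
  fixes n :: nat and I :: "real set"
    and z :: "nat \<Rightarrow> real \<Rightarrow> complex"
  assumes n: "n \<ge> 1"
    and I0: "0 \<in> I"
    and roots: "\<And>x w. x \<in> I \<Longrightarrow>
        Qpoly n x w = complex_of_real ((1 + exp (-2*x)) ^ n) * (\<Prod>j=1..n. w - z j x)"
    and ordered: "\<exists>e>0. \<forall>x. \<bar>x\<bar> < e \<longrightarrow>
        (\<forall>j\<in>{1..n}. z j x \<in> \<real>) \<and>
        (\<forall>j\<in>{1..n}. \<forall>k\<in>{1..n}. j < k \<longrightarrow> Re (z k x) < Re (z j x))"
    and l: "l \<in> {1..n}"
  shows "z l 0 = of_int (int n + 1 - 2 * int l)"
proof -
  have A0: "Asum n w = 2 ^ n * (\<Prod>j=1..n. w - z j 0)" for w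
    using roots[OF I0, of w] by (simp add: Qpoly_0)
  define c :: "nat \<Rightarrow> complex" where "c l = of_int (int n + 1 - 2 * int l)" for l
  have cz: "Asum n (c l) = 0" if "l \<in> {1..n}" for l
  proof -
    have "c l = 2 * of_nat (n - l) + 1 - of_nat n" using that by (simp add: c_def of_nat_diff)
    then show ?thesis using Azero[OF n, of "n - l"] that by simp
  qed
  have "\<exists>j\<in>{1..n}. z j 0 = c l" if "l \<in> {1..n}" for l
  proof -
    have "(\<Prod>j=1..n. c l - z j 0) = 0" using A0[of "c l"] cz[OF that] by simp
    then show ?thesis by auto
  qed
  then obtain \<sigma> where \<sigma>: "\<And>l. l \<in> {1..n} \<Longrightarrow> \<sigma> l \<in> {1..n} \<and> z (\<sigma> l) 0 = c l" by metis
  from ordered have ord: "\<And>j k. j \<in> {1..n} \<Longrightarrow> k \<in> {1..n} \<Longrightarrow> j < k \<Longrightarrow> Re (z k 0) < Re (z j 0)"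
    by force
  have inc: "\<sigma> l < \<sigma> l'" if "l \<in> {1..n}" "l' \<in> {1..n}" "l < l'" for l l'
  proof (rule ccontr)
    assume "\<not> \<sigma> l < \<sigma> l'"
    then consider "\<sigma> l = \<sigma> l'" | "\<sigma> l' < \<sigma> l" by linarith
    then show False
    proof cases
      case 1
      then have "c l = c l'" using \<sigma> that by metis
      then show False using that by (simp add: c_def)
    next
      case 2
      then have "Re (z (\<sigma> l) 0) < Re (z (\<sigma> l') 0)" using ord \<sigma> that by blast
      then have "Re (c l) < Re (c l')" using \<sigma> that by simp
      then show False using that by (simp add: c_def)
    qed
  qed
  have "\<sigma> l = l" by (rule strict_inc_id[of n \<sigma>]) (use \<sigma> inc l in auto)
  then show ?thesis using \<sigma>[OF l] by (simp add: c_def)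
qed



lemma reidx:
  assumes "1 \<le> l"
  shows "(\<Prod>k\<in>{1..n} - {k. int k - int l \<in> X}. g (int k - int l)) = (\<Prod>i\<in>{1 - int l..int n - int l} - X. (g i :: int))"
  by (rule prod.reindex_bij_witness[where i="\<lambda>i. nat (i + int l)" and j="\<lambda>k. int k - int l"])
     (use assms in auto)

lemma SN0:
  fixes d :: int
  assumes d0: "0 \<le> d" and dn: "d < int n"
  shows "(\<Prod>j\<in>{1..n}-{nat d}. d^2 - (int j)^2) * (if d = 0 then 1 else 2*d^2) = (\<Prod>i\<in>{d - int n..d + int n}-{0}. i)"
proof -
  have Pm: "(\<Prod>j\<in>{1..n}-{nat d}. d - int j) = (\<Prod>i\<in>{d - int n..d - 1}-{0}. i)"
    by (rule prod.reindex_bij_witness[where i="\<lambda>i. nat (d - i)" and j="\<lambda>j. d - int j"])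
       (use d0 in auto)
  have Pp: "(\<Prod>j\<in>{1..n}-{nat d}. d + int j) = (\<Prod>i\<in>{d + 1..d + int n}-{2*d}. i)"
    by (rule prod.reindex_bij_witness[where i="\<lambda>i. nat (i - d)" and j="\<lambda>j. d + int j"])
       (use d0 in auto)
  have sq: "(\<Prod>j\<in>{1..n}-{nat d}. d^2 - (int j)^2) = (\<Prod>j\<in>{1..n}-{nat d}. d - int j) * (\<Prod>j\<in>{1..n}-{nat d}. d + int j)"
    unfolding prod.distrib[symmetric] by (rule prod.cong) (simp_all add: power2_eq_square algebra_simps)
  have disj: "({d - int n..d - 1}-{0}) \<inter> ({d + 1..d + int n}-{2*d}) = {}" by auto
  show ?thesis
  proof (cases "d = 0")
    case True
    have "{d - int n..d + int n}-{0} = ({d - int n..d - 1}-{0}) \<union> ({d + 1..d + int n}-{2*d})"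
      using True by auto
    then show ?thesis using True sq Pm Pp disj by (simp add: prod.union_disjoint)
  next
    case False
    have "{d - int n..d + int n}-{0} = insert d (insert (2*d) (({d - int n..d - 1}-{0}) \<union> ({d + 1..d + int n}-{2*d})))"
      using False d0 dn by auto
    then have "(\<Prod>i\<in>{d - int n..d + int n}-{0}. i) = d * (2*d) * ((\<Prod>i\<in>{d - int n..d - 1}-{0}. i) * (\<Prod>i\<in>{d + 1..d + int n}-{2*d}. i))"
      using False d0 disj by (simp add: prod.union_disjoint)
    then show ?thesis using False sq Pm Pp by (simp add: power2_eq_square algebra_simps)
  qed
qed

lemma SN:
  fixes c :: int
  assumes cn: "\<bar>c\<bar> < int n"
  shows "(\<Prod>j\<in>{1..n}-{nat \<bar>c\<bar>}. c^2 - (int j)^2) * (if c = 0 then 1 else 2*c^2) = (\<Prod>i\<in>{c - int n..c + int n}-{0}. i)"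
proof (cases "c \<ge> 0")
  case True
  then show ?thesis using SN0[of c n] cn by simp
next
  case False
  have e: "(\<Prod>j\<in>{1..n}-{nat \<bar>c\<bar>}. c^2 - (int j)^2) * (if c = 0 then 1 else 2*c^2)
      = (\<Prod>i\<in>{-c - int n..-c + int n}-{0}. i)"
    using SN0[of "-c" n] cn False by simp
  have "(\<Prod>i\<in>{-c - int n..-c + int n}-{0}. i) = (\<Prod>i\<in>{c - int n..c + int n}-{0}. - i)"
    by (rule prod.reindex_bij_witness[where i="\<lambda>i. - i" and j="\<lambda>i. - i"]) auto
  also have "\<dots> = (\<Prod>i\<in>{c - int n..c + int n}-{0}. i)"
  proof -
    have z: "0 \<in> {c - int n..c + int n}" using cn by auto
    have "card {c - int n..c + int n} = 2 * n + 1" by simp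
    then have "card ({c - int n..c + int n}-{0}) = 2 * n"
      using z by (simp add: card_Diff_singleton)
    then show ?thesis by (simp add: prod_uminus)
  qed
  finally show ?thesis using e by simp
qed

lemma M_split:
  fixes a b :: int
  assumes a: "a \<le> 0" and b: "0 \<le> b"
  shows "(\<Prod>i\<in>{2*a - 1..2*b + 1}-{0}. i) = (2*a - 1) * (\<Prod>i\<in>{a..b}. 2*i + 1) * 2 ^ nat (b - a) * (\<Prod>i\<in>{a..b}-{0}. i)"
proof -
  have seteq: "{2*a - 1..2*b + 1}-{0} = (\<lambda>i. 2*i + 1) ` {a - 1..b} \<union> (\<lambda>i. 2*i) ` ({a..b}-{0})"
  proof
    show "{2*a - 1..2*b + 1}-{0} \<subseteq> (\<lambda>i. 2*i + 1) ` {a - 1..b} \<union> (\<lambda>i. 2*i) ` ({a..b}-{0})"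
    proof
      fix x assume x: "x \<in> {2*a - 1..2*b + 1}-{0}"
      show "x \<in> (\<lambda>i. 2*i + 1) ` {a - 1..b} \<union> (\<lambda>i. 2*i) ` ({a..b}-{0})"
      proof (cases "even x")
        case True
        then obtain k where k: "x = 2*k" by (rule evenE)
        then have "k \<in> {a..b}-{0}" using x by auto
        then show ?thesis using k by blast
      next
        case False
        then obtain k where k: "x = 2*k + 1" by (rule oddE)
        then have "k \<in> {a - 1..b}" using x by auto
        then show ?thesis using k by blast
      qed
    qed
  next
    show "(\<lambda>i. 2*i + 1) ` {a - 1..b} \<union> (\<lambda>i. 2*i) ` ({a..b}-{0}) \<subseteq> {2*a - 1..2*b + 1}-{0}"
      by (auto; presburger)
  qed
  have disj: "(\<lambda>i. 2*i + 1) ` {a - 1..b} \<inter> (\<lambda>i. 2*i) ` ({a..b}-{0}) = {}"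
    by (auto; presburger)
  have inj1: "inj_on (\<lambda>i::int. 2*i + 1) {a - 1..b}" by (auto simp: inj_on_def)
  have inj2: "inj_on (\<lambda>i::int. 2*i) ({a..b}-{0})" by (auto simp: inj_on_def)
  have p1: "(\<Prod>i\<in>{a - 1..b}. 2*i + 1) = (2*a - 1) * (\<Prod>i\<in>{a..b}. 2*i + 1)"
  proof -
    have "{a - 1..b} = insert (a - 1) {a..b}" using a b by auto
    then show ?thesis by (simp add: algebra_simps)
  qed
  have p2: "(\<Prod>i\<in>{a..b}-{0}. 2*i) = 2 ^ nat (b - a) * (\<Prod>i\<in>{a..b}-{0}. i)"
  proof -
    have "card ({a..b}-{0}) = nat (b - a)" using a b by (simp add: card_Diff_singleton_if)
    then show ?thesis by (simp add: prod.distrib)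
  qed
  show ?thesis
    unfolding seteq using disj inj1 inj2 p1 p2
    by (simp add: prod.union_disjoint prod.reindex)
qed

lemma slope_int:
  assumes l: "l \<in> {1..n}"
  shows "(2 * int l - 1) * (\<Prod>k\<in>{1..n}. 2 * (int k - int l) + 1) * slope_den n l
       = slope_num n l * (\<Prod>k\<in>{1..n}-{l}. 2 * (int k - int l))"
proof -
  define a where "a = 1 - int l"
  define b where "b = int n - int l"
  define c where "c = int n + 1 - 2 * int l"
  define N where "N = n - 1"
  define f where "f = (if c = 0 then 1 else 2*c^2)"
  define G where "G = (\<Prod>i\<in>{a..b}. 2*i + 1)"
  define H where "H = (\<Prod>i\<in>{a..b}-{0}. i)"
  have l1: "1 \<le> l" and ln: "l \<le> n" using l by auto
  have ab: "a \<le> 0" "0 \<le> b" "nat (b - a) = N" using l1 ln by (auto simp: a_def b_def N_def)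
  have fnz: "f \<noteq> 0" by (simp add: f_def)
  have F1: "(\<Prod>k\<in>{1..n}. 2 * (int k - int l) + 1) = G"
    using reidx[OF l1, where n=n and X="{}" and g="\<lambda>i. 2*i + 1"] by (simp add: G_def a_def b_def)
  have F2: "(\<Prod>k\<in>{1..n}-{l}. 2 * (int k - int l)) = 2 ^ N * H"
  proof -
    have s: "{1..n}-{l} = {1..n} - {k. int k - int l \<in> {0}}" by auto
    have "(\<Prod>k\<in>{1..n}-{l}. 2 * (int k - int l)) = (\<Prod>i\<in>{a..b}-{0}. 2*i)"
      unfolding s using reidx[OF l1, where n=n and X="{0}" and g="\<lambda>i. 2*i"] by (simp add: a_def b_def)
    also have "\<dots> = 2 ^ N * H"
    proof -
      have "card ({a..b}-{0}) = N" using ab by (simp add: card_Diff_singleton_if)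
      then show ?thesis by (simp add: prod.distrib H_def)
    qed
    finally show ?thesis .
  qed
  have F3: "slope_den n l * f = 2 ^ N * (2 ^ N * H^2)"
  proof -
    have s: "{1..n}-{l, n+1-l} = {1..n} - {k. int k - int l \<in> {0, c}}"
      using ln by (auto simp: c_def)
    have "(\<Prod>j\<in>{1..n}-{l, n+1-l}. 2 * (int l - int j)^2) = (\<Prod>j\<in>{1..n}-{l, n+1-l}. 2 * (int j - int l)^2)"
      by (rule prod.cong) (simp_all add: power2_commute)
    also have "\<dots> = (\<Prod>i\<in>{a..b}-{0, c}. 2 * i^2)"
      unfolding s using reidx[OF l1, where n=n and X="{0, c}" and g="\<lambda>i. 2*i^2"] by (simp add: a_def b_def)
    finally have d1: "slope_den n l = 2 ^ N * (\<Prod>i\<in>{a..b}-{0, c}. 2 * i^2)"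
      by (simp add: slope_den_def N_def)
    have d2: "(\<Prod>i\<in>{a..b}-{0, c}. 2 * i^2) * f = (\<Prod>i\<in>{a..b}-{0}. 2 * i^2)"
    proof (cases "c = 0")
      case True then show ?thesis by (simp add: f_def)
    next
      case False
      have "{a..b}-{0} = insert c ({a..b}-{0, c})" using False ab l1 ln
        by (auto simp: a_def b_def c_def)
      then show ?thesis using False by (simp add: f_def algebra_simps)
    qed
    have d3: "(\<Prod>i\<in>{a..b}-{0}. 2 * i^2) = 2 ^ N * H^2"
    proof -
      have "card ({a..b}-{0}) = N" using ab by (simp add: card_Diff_singleton_if)
      then show ?thesis by (simp add: prod.distrib H_def prod_power_distrib)
    qed
    show ?thesis using d1 d2 d3 by (simp add: mult.assoc)
  qed
  have F4: "slope_num n l * f = - (\<Prod>i\<in>{2*a - 1..2*b + 1}-{0}. i)"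
  proof -
    have cn: "\<bar>c\<bar> < int n" using l1 ln by (auto simp: c_def)
    have r: "{c - int n..c + int n} = {2*a - 1..2*b + 1}" by (simp add: a_def b_def c_def algebra_simps)
    show ?thesis using SN[OF cn] unfolding slope_num_def Let_def f_def r c_def[symmetric]
      by simp
  qed
  have F5: "(\<Prod>i\<in>{2*a - 1..2*b + 1}-{0}. i) = (2*a - 1) * G * 2 ^ N * H"
    using M_split[OF ab(1,2)] ab(3) by (simp add: G_def H_def)
  have E2: "slope_num n l * (2 ^ N * H) * f = - ((2*a - 1) * G * 2 ^ N * H) * (2 ^ N * H)"
    using F4 F5 by (metis mult.commute mult.left_commute)
  have E3: "2 * int l - 1 = - (2*a - 1)" by (simp add: a_def)
  have "(2 * int l - 1) * G * slope_den n l * f = (2 * int l - 1) * G * (2 ^ N * (2 ^ N * H^2))"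
    using F3 by (simp add: mult.assoc)
  also have "\<dots> = - ((2*a - 1) * G * 2 ^ N * H) * (2 ^ N * H)"
    unfolding E3 by (simp add: power2_eq_square algebra_simps)
  also have "\<dots> = slope_num n l * (2 ^ N * H) * f" using E2 by simp
  finally have "(2 * int l - 1) * G * slope_den n l * f = slope_num n l * (2 ^ N * H) * f" .
  then show ?thesis using fnz F1 F2 by simp
qed



theorem mainTheorem3:
  fixes n :: nat and I :: "real set"
    and z z' z'' :: "nat \<Rightarrow> real \<Rightarrow> complex"
  assumes n: "n \<ge> 1"
    and I: "open I" "connected I" "0 \<in> I"
    and roots: "\<And>x w. x \<in> I \<Longrightarrow>
        Qpoly n x w = complex_of_real ((1 + exp (-2*x)) ^ n) * (\<Prod>j=1..n. w - z j x)"
    and d1: "\<And>l x. l \<in> {1..n} \<Longrightarrow> x \<in> I \<Longrightarrow> (z l has_vector_derivative z' l x) (at x)"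
    and d2: "\<And>l x. l \<in> {1..n} \<Longrightarrow> x \<in> I \<Longrightarrow> (z' l has_vector_derivative z'' l x) (at x)"
    and distinct: "\<And>j k x. j \<in> {1..n} \<Longrightarrow> k \<in> {1..n} \<Longrightarrow> j \<noteq> k \<Longrightarrow> x \<in> I \<Longrightarrow> z j x \<noteq> z k x"
    and ordered: "\<exists>e>0. \<forall>x. \<bar>x\<bar> < e \<longrightarrow>
        (\<forall>j\<in>{1..n}. z j x \<in> \<real>) \<and>
        (\<forall>j\<in>{1..n}. \<forall>k\<in>{1..n}. j < k \<longrightarrow> Re (z k x) < Re (z j x))"
  shows "(\<forall>l\<in>{1..n}. \<forall>x\<in>I.
            z'' l x + 2 * z l x * z' l x
              = (\<Sum>j\<in>{1..n} - {l}. 2 * z' l x * z' j x / (z l x - z j x)))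
       \<and> (\<forall>l\<in>{1..n}. z l 0 = of_int (int n + 1 - 2 * int l))
       \<and> (\<forall>l\<in>{1..n}. z' l 0 = of_int (slope_num n l) / of_int (slope_den n l))"
proof (intro conjI ballI)
  fix l x assume l: "l \<in> {1..n}" and x: "x \<in> I"
  show "z'' l x + 2 * z l x * z' l x
              = (\<Sum>j\<in>{1..n} - {l}. 2 * z' l x * z' j x / (z l x - z j x))"
    by (rule main_ode(2)[OF n I(1) roots d1 d2 distinct l x])
next
  fix l assume l: "l \<in> {1..n}"
  show "z l 0 = of_int (int n + 1 - 2 * int l)"
    by (rule zeros_at_0[OF n I(3) roots ordered l])
next
  fix l assume l: "l \<in> {1..n}"
  have zk: "z k 0 = of_int (int n + 1 - 2 * int k)" if "k \<in> {1..n}" for k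
    by (rule zeros_at_0[OF n I(3) roots ordered that])
  define w where "w = z l 0"
  define D1 where "D1 = (\<Prod>k\<in>{1..n}-{l}. 2 * (int k - int l))"
  define P1 where "P1 = (\<Prod>k\<in>{1..n}. 2 * (int k - int l) + 1)"
  have rel: "Q1 n 0 w = - (2 ^ n) * z' l 0 * (\<Prod>k\<in>{1..n}-{l}. w - z k 0)"
    using main_ode(1)[OF n I(1) roots d1 d2 distinct l I(3)] by (simp add: w_def)
  have A0: "Asum n v = 2 ^ n * (\<Prod>j=1..n. v - z j 0)" for v
    using roots[OF I(3), of v] by (simp add: Qpoly_0)
  have "(\<Prod>j=1..n. w - z j 0) = 0"
    using l by (subst prod_zero_iff) (auto simp: w_def intro!: bexI[of _ l])
  then have Aw: "Asum n w = 0" using A0[of w] by simp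
  have Q1w: "Q1 n 0 w = (w - of_nat n) * (2 ^ n * (\<Prod>j=1..n. w + 1 - z j 0))"
    using Q1_0[of n w] Aw RS[of w n] A0[of "w+1"] by simp
  have R: "(\<Prod>k\<in>{1..n}-{l}. w - z k 0) = of_int D1"
    unfolding D1_def of_int_prod using l zk by (intro prod.cong) (auto simp: w_def)
  have P: "(\<Prod>j=1..n. w + 1 - z j 0) = of_int P1"
    unfolding P1_def of_int_prod using l zk by (intro prod.cong) (auto simp: w_def)
  have wn: "w - of_nat n = - of_int (2 * int l - 1)" using zk[OF l] by (simp add: w_def)
  have D1nz: "D1 \<noteq> 0" unfolding D1_def by (simp add: prod_zero_iff)
  have dennz: "slope_den n l \<noteq> 0" unfolding slope_den_def by (simp add: prod_zero_iff)
  have "- (2 ^ n) * z' l 0 * of_int D1 = - of_int (2 * int l - 1) * (2 ^ n * of_int P1)"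
    using rel Q1w R P wn by simp
  then have "(2 ^ n) * (z' l 0 * of_int D1) = (2 ^ n) * (of_int ((2 * int l - 1) * P1) :: complex)"
  proof -
    assume h: "- (2 ^ n) * z' l 0 * of_int D1 = - of_int (2 * int l - 1) * (2 ^ n * (of_int P1 :: complex))"
    define K :: complex where "K = 2 ^ n"
    have "- K * z' l 0 * of_int D1 = - of_int (2 * int l - 1) * (K * of_int P1)" using h by (simp add: K_def)
    then have "K * (z' l 0 * of_int D1) = K * (of_int ((2 * int l - 1) * P1))" unfolding of_int_mult by algebra
    then show ?thesis by (simp add: K_def)
  qed
  then have "z' l 0 * of_int D1 = of_int ((2 * int l - 1) * P1)" by simp
  then have z'eq: "z' l 0 = of_int ((2 * int l - 1) * P1) / of_int D1"
    using D1nz by (simp add: field_simps)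
  have "(2 * int l - 1) * P1 * slope_den n l = slope_num n l * D1"
    using slope_int[OF l] by (simp add: P1_def D1_def)
  then have "(of_int ((2 * int l - 1) * P1) :: complex) * of_int (slope_den n l) = of_int (slope_num n l) * of_int D1"
    by (metis of_int_mult)
  note eq = this
  have Dnz: "(of_int D1::complex) \<noteq> 0" using D1nz by simp
  have Snz: "(of_int (slope_den n l)::complex) \<noteq> 0" using dennz by simp
  show "z' l 0 = of_int (slope_num n l) / of_int (slope_den n l)"
    unfolding z'eq frac_eq_eq[OF Dnz Snz] by (rule eq)
qed


end
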